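(* Let $E$ be a non-empty set and let $S:(E\times[0,1]\times\{0,1\})^*\to(-\infty,\infty]$ be a forecast-continuous supermartingale. Then for any $T\ge1$ and any $e_1,\dots,e_T\in E$, $\pi_1,\dots,\pi_{T-1}\in[0,1]$, $\omega_1,\dots,\omega_{T-1}\in\{0,1\}$, there exists $\pi\in[0,1]$ such that for both $\omega=0$ and $\omega=1$, $$S(e_1,\pi_1,\omega_1,\dots,e_{T-1},\pi_{T-1},\omega_{T-1},e_T,\pi,\omega)\le S(e_1,\pi_1,\omega_1,\dots,e_{T-1},\pi_{T-1},\omega_{T-1}).$$
   Context: $(E\times[0,1]\times\{0,1\})^*$ denotes the set of finite sequences of triples. A function $S:(E\times[0,1]\times\{0,1\})^*\to(-\infty,\infty]$ is a (game-theoretic) supermartingale if for any $T$, any $e_1,\dots,e_T\in E$, any $\pi_1,\dots,\pi_T\in[0,1]$ and any $\omega_1,\dots,\omega_{T-1}\in\{0,1\}$, $\pi_T S(e_1,\pi_1,\omega_1,\dots,e_T,\pi_T,1)+(1-\pi_T)S(e_1,\pi_1,\omega_1,\dots,e_T,\pi_T,0)\le S(e_1,\pi_1,\omega_1,\dots,e_{T-1},\pi_{T-1},\omega_{T-1})$. It is forecast-continuous if for all $T\ge1$, all $e_1,\dots,e_T\in E$, all $\pi_1,\dots,\pi_{T-1}\in[0,1]$ and all $\omega_1,\dots,\omega_T\in\{0,1\}$, the map $\pi\mapsto S(e_1,\pi_1,\omega_1,\dots,e_{T-1},\pi_{T-1},\omega_{T-1},e_T,\pi,\omega_T)$ is continuous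 on $[0,1]$. *)

theory Defs
  imports "HOL-Analysis.Analysis"
begin

text \<open>A finite sequence of triples (e, pi, omega) is a list; omega in {0,1} is encoded as bool
  (True = 1, False = 0). A list is admissible if all e lie in E and all pi lie in [0,1].\<close>

definition admissible :: "'e set \<Rightarrow> ('e \<times> real \<times> bool) list \<Rightarrow> bool" where
  "admissible E xs \<longleftrightarrow> (\<forall>(e, p, w) \<in> set xs. e \<in> E \<and> p \<in> {0..1})"

text \<open>Values live in ereal; the codomain (-inf, inf] is imposed separately.
  Note ereal 0 * \<infinity> = 0 (the usual convention).\<close>

definition supermartingale :: "'e set \<Rightarrow> (('e \<times> real \<times> bool) list \<Rightarrow> ereal) \<Rightarrow> bool" where
  "supermartingale E S \<longleftrightarrow>
     (\<forall>xs e p. admissible E xs \<and> e \<in> E \<and> p \<in> {0..1} \<longrightarrow>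
        ereal p * S (xs @ [(e, p, True)]) + ereal (1 - p) * S (xs @ [(e, p, False)]) \<le> S xs)"

definition forecast_continuous :: "'e set \<Rightarrow> (('e \<times> real \<times> bool) list \<Rightarrow> ereal) \<Rightarrow> bool" where
  "forecast_continuous E S \<longleftrightarrow>
     (\<forall>xs e w. admissible E xs \<and> e \<in> E \<longrightarrow>
        continuous_on {0..1} (\<lambda>p. S (xs @ [(e, p, w)])))"

end

theory Submission
  imports Defs
begin

lemma mix_gt:
  fixes a b :: ereal and p r :: real
  assumes "0 \<le> p" "p \<le> 1" "ereal r < a" "ereal r < b"
  shows "ereal r < ereal p * a + ereal (1 - p) * b"
proof (cases a)
  case (real x)
  show ?thesis
  proof (cases b)
    case (real y)
    have "r < p * x + (1 - p) * y"
    proof -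
      have "p * r \<le> p * x" using assms \<open>a = ereal x\<close> by (intro mult_left_mono) auto
      moreover have "(1-p) * r \<le> (1-p) * y" using assms \<open>b = ereal y\<close> by (intro mult_left_mono) auto
      moreover have "p * r < p * x \<or> (1-p) * r < (1-p) * y"
        using assms \<open>a = ereal x\<close> \<open>b = ereal y\<close>
        by (cases "p = 0") (auto intro: mult_strict_left_mono)
      ultimately show ?thesis by (auto simp: algebra_simps)
    qed
    then show ?thesis using \<open>a = ereal x\<close> \<open>b = ereal y\<close> by simp
  next
    case PInf
    then show ?thesis using assms \<open>a = ereal x\<close>
      by (cases "p = 1") auto
  next
    case MInf then show ?thesis using assms by simp
  qed
next
  case PInf
  show ?thesis
  proof (cases "p = 0")
    case True then show ?thesis using assms by (simp add: zero_ereal_def[symmetric])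
  next
    case False
    then have "ereal p * a = \<infinity>" using PInf assms by simp
    moreover have "b \<noteq> -\<infinity>" using assms by auto
    ultimately have eq: "ereal p * a + ereal (1 - p) * b = \<infinity>" by simp
    show ?thesis by (subst eq) simp
  qed
next
  case MInf then show ?thesis using assms by simp
qed

theorem lemma1:
  fixes E :: "'e set" and S :: "('e \<times> real \<times> bool) list \<Rightarrow> ereal"
  assumes "E \<noteq> {}"
    and "\<forall>xs. admissible E xs \<longrightarrow> S xs \<noteq> -\<infinity>"
    and "supermartingale E S"
    and "forecast_continuous E S"
    and "admissible E xs" and "e \<in> E"
  shows "\<exists>p \<in> {0..1}. \<forall>w. S (xs @ [(e, p, w)]) \<le> S xs"
proof (cases "S xs = \<infinity>")
  case True then show ?thesis by auto
next
  case False
  then obtain r where r: "S xs = ereal r" using assms(2,5) by (cases "S xs") auto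
  define f where "f w p = S (xs @ [(e, p, w)])" for w p
  have cont: "continuous_on {0..1} (f w)" for w
    using assms(4,5,6) unfolding forecast_continuous_def f_def by auto
  have sm: "ereal p * f True p + ereal (1 - p) * f False p \<le> S xs" if "p \<in> {0..1}" for p
    using assms(3,5,6) that unfolding supermartingale_def f_def by auto
  define A where "A w = {0..1} \<inter> f w -` {..S xs}" for w
  have clA: "closed (A w)" for w
    unfolding A_def by (rule continuous_closed_preimage[OF cont]) auto
  have cover: "{0..1} \<subseteq> A True \<union> A False"
  proof
    fix p :: real assume p: "p \<in> {0..1}"
    show "p \<in> A True \<union> A False"
    proof (rule ccontr)
      assume "p \<notin> A True \<union> A False"
      then have "ereal r < f True p" "ereal r < f False p" using p r unfolding A_def by auto
      then have "ereal r < ereal p * f True p + ereal (1 - p) * f False p"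
        using p by (intro mix_gt) auto
      with sm[OF p] r show False by simp
    qed
  qed
  have "1 \<in> A True" using sm[of 1] unfolding A_def by (simp add: zero_ereal_def[symmetric])
  moreover have "0 \<in> A False" using sm[of 0] unfolding A_def by (simp add: zero_ereal_def[symmetric])
  moreover have "A w \<subseteq> {0..1}" for w unfolding A_def by auto
  ultimately have "A True \<inter> A False \<inter> {0..1} \<noteq> {}"
    using connected_closedD[OF connected_Icc[of "0::real" 1] _ cover clA clA]
    by blast
  then obtain p where "p \<in> A True" "p \<in> A False" by auto
  then show ?thesis unfolding A_def f_def by (intro bexI[of _ p]) (auto, metis (full_types))
qed

end
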